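(* Let $w=w_1\cdots w_n$ be a word of length $n\ge 2$ using only two letters, such that $w_i\ne w_{n-i+1}$ for all $1\le i\le n$. Then $f(w)=2n$.
   Context: A word of length $n$ is a sequence $w=w_1w_2\cdots w_n$ of letters (symbols). Let $[n]=\{1,\dots,n\}$. An $n$-grid is a function $G:[n]^2\to\Sigma$, where $\Sigma$ is an arbitrary set of letters. The $i$th row of $G$ contains $w$ if $G(i,j)=w_j$ for all $1\le j\le n$, or $G(i,j)=w_{n-j+1}$ for all $1\le j\le n$. The $j$th column contains $w$ if $G(i,j)=w_i$ for all $i$, or $G(i,j)=w_{n-i+1}$ for all $i$. The main diagonal contains $w$ if $G(i,i)=w_i$ for all $i$ or $G(i,i)=w_{n-i+1}$ for all $i$; the anti-diagonal contains $w$ if $G(i,n-i+1)=w_i$ for all $i$ or $G(i,n-i+1)=w_{n-i+1}$ for all $i$. Let $f(w,G)$ be the number of the $2n+2$ lines ($n$ rows, $n$ columns, $2$ diagonals) of $G$ that contain $w$, and $f(w)=\max_G f(w,G)$ over all $n$-grids $G$. *)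

theory Defs
  imports Main
begin

text \<open>Words are lists; the letter w_j (1-based) is w ! (j - 1).
  An n-grid is a function G :: nat \<Rightarrow> nat \<Rightarrow> 'a, of which only the values
  on {1..n} x {1..n} matter.\<close>

definition seq_contains :: "'a list \<Rightarrow> (nat \<Rightarrow> 'a) \<Rightarrow> bool" where
  "seq_contains w s \<longleftrightarrow>
     (\<forall>k\<in>{1..length w}. s k = w ! (k - 1)) \<or>
     (\<forall>k\<in>{1..length w}. s k = w ! (length w - k))"

definition row_contains :: "'a list \<Rightarrow> (nat \<Rightarrow> nat \<Rightarrow> 'a) \<Rightarrow> nat \<Rightarrow> bool" where
  "row_contains w G i \<longleftrightarrow> seq_contains w (\<lambda>j. G i j)"

definition col_contains :: "'a list \<Rightarrow> (nat \<Rightarrow> nat \<Rightarrow> 'a) \<Rightarrow> nat \<Rightarrow> bool" where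
  "col_contains w G j \<longleftrightarrow> seq_contains w (\<lambda>i. G i j)"

definition diag_contains :: "'a list \<Rightarrow> (nat \<Rightarrow> nat \<Rightarrow> 'a) \<Rightarrow> bool" where
  "diag_contains w G \<longleftrightarrow> seq_contains w (\<lambda>i. G i i)"

definition antidiag_contains :: "'a list \<Rightarrow> (nat \<Rightarrow> nat \<Rightarrow> 'a) \<Rightarrow> bool" where
  "antidiag_contains w G \<longleftrightarrow> seq_contains w (\<lambda>i. G i (length w - i + 1))"

definition fwG :: "'a list \<Rightarrow> (nat \<Rightarrow> nat \<Rightarrow> 'a) \<Rightarrow> nat" where
  "fwG w G =
     card {i\<in>{1..length w}. row_contains w G i}
   + card {j\<in>{1..length w}. col_contains w G j}
   + (if diag_contains w G then 1 else 0)
   + (if antidiag_contains w G then 1 else 0)"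

definition fw :: "'a list \<Rightarrow> nat" where
  "fw w = Max (range (fwG w))"

end

theory Submission
  imports Defs
begin

lemma card_two_fail:
  assumes "a \<in> {1..n}" "b \<in> {1..n}" "a \<noteq> b"
  shows "card {i\<in>{1..n::nat}. P i} + (if P a then 0 else 1) + (if P b then 0 else 1) \<le> n"
proof -
  let ?F = "{x\<in>{a,b}. \<not> P x}"
  have sub: "{i\<in>{1..n}. P i} \<subseteq> {1..n} - ?F" by auto
  have F: "?F \<subseteq> {1..n}" using assms by auto
  have "card {i\<in>{1..n}. P i} \<le> card ({1..n} - ?F)" by (rule card_mono) (use sub in auto)
  also have "\<dots> = n - card ?F" using F by (simp add: card_Diff_subset finite_subset)
  finally have 1: "card {i\<in>{1..n}. P i} \<le> n - card ?F" .
  have e: "?F = (if P a then {} else {a}) \<union> (if P b then {} else {b})" by auto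
  have "card ?F = (if P a then 0 else 1) + (if P b then 0 else 1)"
    unfolding e using assms(3) by (cases "P a"; cases "P b") auto
  moreover have "card ?F \<le> n" using F card_mono[of "{1..n}" ?F] by simp
  ultimately show ?thesis using 1 by linarith
qed

lemma mid_prop:
  assumes n: "length w = 2*m" "m \<ge> 1"
    and h: "\<forall>i\<in>{1..length w}. w ! (i - 1) \<noteq> w ! (length w - i)"
    and s: "seq_contains w s"
  shows "s m \<noteq> s (m+1) \<and> s m \<in> set w \<and> s (m+1) \<in> set w"
proof -
  have mi: "m \<in> {1..length w}" "m+1 \<in> {1..length w}" using n by auto
  have lm: "length w - m = m" "length w - (m+1) = m - 1" using n by auto
  have d: "w ! (m-1) \<noteq> w ! m" using h mi(1) lm by force
  have i1: "w ! (m-1) \<in> set w" "w ! m \<in> set w" using n by auto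
  have "(s m = w!(m-1) \<and> s (m+1) = w!m) \<or> (s m = w!m \<and> s(m+1) = w!(m-1))"
  proof (cases "\<forall>k\<in>{1..length w}. s k = w ! (k - 1)")
    case True
    then show ?thesis using mi by simp
  next
    case False
    then have "\<forall>k\<in>{1..length w}. s k = w ! (length w - k)" using s unfolding seq_contains_def by blast
    then have "s m = w ! (length w - m)" "s (m+1) = w ! (length w - (m+1))" using mi by auto
    then show ?thesis using lm by simp
  qed
  then show ?thesis using d i1 by auto
qed

theorem proposition3:
  fixes w :: "'a list"
  assumes "length w \<ge> 2"
    and "card (set w) = 2"
    and "\<forall>i\<in>{1..length w}. w ! (i - 1) \<noteq> w ! (length w - i)"
  shows "fw w = 2 * length w"
proof -
  define n where "n = length w"
  have ev: "even n"
  proof (rule ccontr)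
    assume "odd n"
    then obtain k where k: "n = 2*k+1" by (metis oddE)
    have "k+1 \<in> {1..length w}" using k n_def by auto
    then have "w ! k \<noteq> w ! (n - (k+1))" using assms(3) n_def by force
    moreover have "n - (k+1) = k" using k by simp
    ultimately show False by simp
  qed
  then obtain m where m: "n = 2*m" by blast
  have m1: "m \<ge> 1" using m assms(1) n_def by simp
  have wm: "length w = 2*m" using m n_def by simp
  have tri: "False" if "x \<in> set w" "y \<in> set w" "z \<in> set w" "x \<noteq> y" "y \<noteq> z" "x \<noteq> z" for x y z
  proof -
    have "card {x,y,z} \<le> card (set w)" by (rule card_mono) (use that in auto)
    then show False using that assms(2) by simp
  qed
  have upper: "fwG w G \<le> 2*n" for G
  proof -
    define A where "A = G m m"
    define B where "B = G m (m+1)"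
    define C where "C = G (m+1) m"
    define D where "D = G (m+1) (m+1)"
    have r1: "A \<noteq> B \<and> A \<in> set w \<and> B \<in> set w" if "row_contains w G m"
      using mid_prop[OF wm m1 assms(3)] that unfolding row_contains_def A_def B_def by blast
    have r2: "C \<noteq> D \<and> C \<in> set w \<and> D \<in> set w" if "row_contains w G (m+1)"
      using mid_prop[OF wm m1 assms(3)] that unfolding row_contains_def C_def D_def by blast
    have c1: "A \<noteq> C \<and> A \<in> set w \<and> C \<in> set w" if "col_contains w G m"
      using mid_prop[OF wm m1 assms(3)] that unfolding col_contains_def A_def C_def by blast
    have c2: "B \<noteq> D \<and> B \<in> set w \<and> D \<in> set w" if "col_contains w G (m+1)"
      using mid_prop[OF wm m1 assms(3)] that unfolding col_contains_def B_def D_def by blast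
    have dg: "A \<noteq> D \<and> A \<in> set w \<and> D \<in> set w" if "diag_contains w G"
      using mid_prop[OF wm m1 assms(3)] that unfolding diag_contains_def A_def D_def by blast
    have e1: "length w - m + 1 = m+1" "length w - (m+1) + 1 = m" using wm m1 by auto
    have ad: "B \<noteq> C \<and> B \<in> set w \<and> C \<in> set w" if "antidiag_contains w G"
      using mid_prop[OF wm m1 assms(3), of "\<lambda>i. G i (length w - i + 1)"] that
      unfolding antidiag_contains_def B_def C_def e1 by blast
    have t1: "\<not> (row_contains w G m \<and> col_contains w G (m+1) \<and> diag_contains w G)"
      using r1 c2 dg tri by metis
    have t2: "\<not> (row_contains w G m \<and> antidiag_contains w G \<and> col_contains w G m)"
      using r1 ad c1 tri by metis
    have t3: "\<not> (col_contains w G m \<and> row_contains w G (m+1) \<and> diag_contains w G)"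
      using c1 r2 dg tri by metis
    have t4: "\<not> (antidiag_contains w G \<and> row_contains w G (m+1) \<and> col_contains w G (m+1))"
      using ad r2 c2 tri by metis
    have mm: "m \<in> {1..n}" "m+1 \<in> {1..n}" "m \<noteq> m+1" using m m1 by auto
    have R: "card {i\<in>{1..n}. row_contains w G i} + (if row_contains w G m then 0 else 1)
       + (if row_contains w G (m+1) then 0 else 1) \<le> n"
      by (rule card_two_fail[OF mm])
    have Cc: "card {i\<in>{1..n}. col_contains w G i} + (if col_contains w G m then 0 else 1)
       + (if col_contains w G (m+1) then 0 else 1) \<le> n"
      by (rule card_two_fail[OF mm])
    show ?thesis unfolding fwG_def n_def[symmetric]
      using R Cc t1 t2 t3 t4 by (auto split: if_splits)
  qed
  obtain a b where ab: "set w = {a,b}" "a \<noteq> b" using assms(2) by (meson card_2_iff)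
  define comp where "comp x = (if x = a then b else a)" for x
  define G where "G i j = (if w!(i-1) = a then w!(j-1) else comp (w!(j-1)))" for i j
  have inw: "w!(k-1) \<in> {a,b}" if "k \<in> {1..n}" for k
    proof -
    have "k - 1 < length w" using that n_def by auto
    then show ?thesis using ab(1) nth_mem by blast
  qed
  have cw: "comp (w!(k-1)) = w!(n-k)" if "k \<in> {1..n}" for k
  proof -
    have "n - k + 1 \<in> {1..n}" using that by auto
    from inw[OF this] have "w!(n-k) \<in> {a,b}" using that by simp
    moreover have "w!(k-1) \<noteq> w!(n-k)" using assms(3) that n_def by auto
    ultimately show ?thesis using inw[OF that] ab(2) unfolding comp_def by auto
  qed
  have rows: "row_contains w G i" if "i \<in> {1..n}" for i
    unfolding row_contains_def seq_contains_def G_def using cw n_def by auto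
  have cols: "col_contains w G j" if "j \<in> {1..n}" for j
  proof (cases "w!(j-1) = a")
    case True
    have "G k j = w ! (k - 1)" if "k \<in> {1..n}" for k
      using inw[OF that] True ab(2) unfolding G_def comp_def by auto
    then show ?thesis unfolding col_contains_def seq_contains_def n_def by auto
  next
    case False
    then have "w!(j-1) = b" using inw[OF that] by auto
    have "G k j = w ! (n - k)" if "k \<in> {1..n}" for k
      using cw[OF that] \<open>w!(j-1) = b\<close> ab(2) unfolding G_def comp_def by auto
    then show ?thesis unfolding col_contains_def seq_contains_def n_def by auto
  qed
  have "{i\<in>{1..n}. row_contains w G i} = {1..n}" using rows by auto
  moreover have "{i\<in>{1..n}. col_contains w G i} = {1..n}" using cols by auto
  ultimately have low: "fwG w G \<ge> 2*n" unfolding fwG_def n_def[symmetric] by simp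
  have fin: "finite (range (fwG w))"
    by (rule finite_subset[of _ "{0..2*n}"]) (use upper in auto)
  have "fw w \<le> 2*n" unfolding fw_def using fin upper by (simp add: Max_le_iff)
  moreover have "fw w \<ge> fwG w G" unfolding fw_def using fin by (simp add: Max_ge)
  ultimately show ?thesis using low n_def by simp
qed

end
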